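(* Let $1\le p<\infty$, $X=\ell_p(\mathbb Z_+)$, and let $\mathbf u,\mathbf v$ be bounded sequences of non-zero scalars. Assume that either $$\liminf_{n\to\infty}\max_{0\le d\le N}\left|\frac{u_1\cdots u_{n+d}}{v_1\cdots v_{n+d}}\right|=0\quad\text{for all }N\ge0,$$ or $$\limsup_{n\to\infty}\min_{0\le d\le N}\left|\frac{u_1\cdots u_{n+d}}{v_1\cdots v_{n+d}}\right|=\infty\quad\text{for all }N\ge0.$$ Then $B_{\mathbf u}$ and $B_{\mathbf v}$ are orthogonal.
   Context: $(e_n)_{n\ge0}$ is the canonical basis of $\ell_p(\mathbb Z_+)$ (real or complex). For a bounded sequence $\mathbf w$ of non-zero scalars, $B_{\mathbf w}e_0=0$, $B_{\mathbf w}e_n=w_ne_{n-1}$. Two operators $T_1,T_2$ on $X$ are orthogonal if whenever $m_1,m_2$ are Borel probability measures invariant under $T_1$, $T_2$ respectively (i.e. $m_i(T_i^{-1}A)=m_i(A)$ for Borel $A$) with $m_1(\{0\})=0=m_2(\{0\})$, then $m_1$ and $m_2$ are mutually singular. *)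

theory Defs
  imports "HOL-Analysis.Analysis" "HOL-Probability.Probability"
begin

definition lp :: "real \<Rightarrow> (nat \<Rightarrow> 'a::real_normed_field) set" where
  "lp p = {x. summable (\<lambda>n. norm (x n) powr p)}"

definition lp_norm :: "real \<Rightarrow> (nat \<Rightarrow> 'a::real_normed_field) \<Rightarrow> real" where
  "lp_norm p x = (\<Sum>n. norm (x n) powr p) powr (1 / p)"

definition lp_topology :: "real \<Rightarrow> (nat \<Rightarrow> 'a::real_normed_field) topology" where
  "lp_topology p = Metric_space.mtopology (lp p) (\<lambda>x y. lp_norm p (\<lambda>n. x n - y n))"

definition lp_borel :: "real \<Rightarrow> (nat \<Rightarrow> 'a::real_normed_field) measure" where
  "lp_borel p = sigma (lp p) {U. openin (lp_topology p) U}"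

text \<open>Weighted backward shift: B_w e_0 = 0, B_w e_n = w_n e_(n-1),
  i.e. (B_w x)_k = w_(k+1) x_(k+1).\<close>

definition wshift :: "(nat \<Rightarrow> 'a::real_normed_field) \<Rightarrow> (nat \<Rightarrow> 'a) \<Rightarrow> (nat \<Rightarrow> 'a)" where
  "wshift w x = (\<lambda>k. w (Suc k) * x (Suc k))"

definition lp_invariant_prob ::
  "real \<Rightarrow> ((nat \<Rightarrow> 'a::real_normed_field) \<Rightarrow> (nat \<Rightarrow> 'a)) \<Rightarrow> (nat \<Rightarrow> 'a) measure \<Rightarrow> bool" where
  "lp_invariant_prob p T m \<longleftrightarrow>
     prob_space m \<and> sets m = sets (lp_borel p) \<and> space m = lp p \<and>
     (\<forall>A \<in> sets (lp_borel p). emeasure m {x \<in> lp p. T x \<in> A} = emeasure m A)"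

definition mutually_singular :: "'b measure \<Rightarrow> 'b measure \<Rightarrow> bool" where
  "mutually_singular m1 m2 \<longleftrightarrow>
     (\<exists>A \<in> sets m1. A \<in> sets m2 \<and> emeasure m1 A = 0 \<and> emeasure m2 (space m2 - A) = 0)"

definition lp_orthogonal ::
  "real \<Rightarrow> ((nat \<Rightarrow> 'a::real_normed_field) \<Rightarrow> (nat \<Rightarrow> 'a)) \<Rightarrow> ((nat \<Rightarrow> 'a) \<Rightarrow> (nat \<Rightarrow> 'a)) \<Rightarrow> bool" where
  "lp_orthogonal p T1 T2 \<longleftrightarrow>
     (\<forall>m1 m2. lp_invariant_prob p T1 m1 \<and> lp_invariant_prob p T2 m2 \<and>
        emeasure m1 {\<lambda>n. 0} = 0 \<and> emeasure m2 {\<lambda>n. 0} = 0 \<longrightarrow> mutually_singular m1 m2)"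

end

theory Submission
  imports Defs
begin

lemma powr_add_bound:
  fixes a b :: "'a::real_normed_field"
  assumes "0 \<le> p"
  shows "norm (a + b) powr p \<le> 2 powr p * (norm a powr p + norm b powr p)"
proof -
  have "norm (a + b) \<le> 2 * max (norm a) (norm b)" using norm_triangle_ineq[of a b] by linarith
  then have "norm (a + b) powr p \<le> (2 * max (norm a) (norm b)) powr p"
    by (intro powr_mono2) (auto simp: assms)
  also have "\<dots> = 2 powr p * max (norm a) (norm b) powr p" by (simp add: powr_mult)
  also have "max (norm a) (norm b) powr p \<le> norm a powr p + norm b powr p"
    by (cases "norm a \<le> norm b") (auto simp: max_def)
  finally show ?thesis by (simp add: mult_left_mono)
qed

lemma lp_add:
  assumes "0 \<le> p" "f \<in> lp p" "g \<in> lp p"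
  shows "summable (\<lambda>n. norm (f n + g n) powr p)"
proof (rule summable_comparison_test')
  show "summable (\<lambda>n. 2 powr p * (norm (f n) powr p + norm (g n) powr p))"
    using assms by (intro summable_mult summable_add) (auto simp: lp_def)
  show "norm (norm (f n + g n) powr p) \<le> 2 powr p * (norm (f n) powr p + norm (g n) powr p)" for n
    using powr_add_bound[OF assms(1)] by simp
qed

lemma lp_minus: "f \<in> lp p \<Longrightarrow> (\<lambda>n. - f n) \<in> lp p"
  by (simp add: lp_def)

lemma lp_diff:
  assumes "0 \<le> p" "f \<in> lp p" "g \<in> lp p"
  shows "(\<lambda>n. f n - g n) \<in> lp p"
  using lp_add[OF assms(1,2) lp_minus[OF assms(3)]] by (simp add: lp_def)

lemma convex_pow_ineq:
  fixes a b s t p :: real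
  assumes "1 \<le> p" "0 \<le> a" "0 \<le> b" "a + b = 1" "0 \<le> s" "0 \<le> t"
  shows "(a * s + b * t) powr p \<le> a * s powr p + b * t powr p"
proof -
  have pw: "c powr p \<le> c" if "0 \<le> c" "c \<le> 1" for c :: real
    using powr_mono'[OF assms(1) that] that by simp
  consider "s = 0" | "t = 0" | "s > 0" "t > 0" using assms by linarith
  then show ?thesis
  proof cases
    case 1
    then have "(a * s + b * t) powr p = b powr p * t powr p" using assms by (simp add: powr_mult)
    also have "\<dots> \<le> b * t powr p" using pw[of b] assms by (intro mult_right_mono) auto
    finally show ?thesis using 1 assms by simp
  next
    case 2
    then have "(a * s + b * t) powr p = a powr p * s powr p" using assms by (simp add: powr_mult)
    also have "\<dots> \<le> a * s powr p" using pw[of a] assms by (intro mult_right_mono) auto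
    finally show ?thesis using 2 assms by simp
  next
    case 3
    have "(\<lambda>x. x powr p) ((1 - b) *\<^sub>R s + b *\<^sub>R t) \<le> (1 - b) * (\<lambda>x. x powr p) s + b * (\<lambda>x. x powr p) t"
      by (rule convex_onD[OF powr_convex[OF assms(1)]]) (use assms 3 in auto)
    moreover have "(1 - b) *\<^sub>R s + b *\<^sub>R t = a * s + b * t" "1 - b = a" using assms by auto
    ultimately show ?thesis by simp
  qed
qed

lemma lp_norm_zero_iff:
  assumes "0 < p" "f \<in> lp p"
  shows "lp_norm p f = 0 \<longleftrightarrow> (\<forall>n. f n = 0)"
proof -
  have "lp_norm p f = 0 \<longleftrightarrow> (\<Sum>n. norm (f n) powr p) = 0"
    unfolding lp_norm_def by simp
  also have "\<dots> \<longleftrightarrow> (\<forall>n. norm (f n) powr p = 0)"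
    using assms by (intro suminf_eq_zero_iff) (auto simp: lp_def)
  finally show ?thesis by simp
qed

lemma lp_norm_pow:
  assumes "0 < p" "f \<in> lp p"
  shows "lp_norm p f powr p = (\<Sum>n. norm (f n) powr p)"
proof -
  have "0 \<le> (\<Sum>n. norm (f n) powr p)" using assms by (intro suminf_nonneg) (auto simp: lp_def)
  then show ?thesis unfolding lp_norm_def using assms by (simp add: powr_powr)
qed

lemma minkowski:
  assumes "1 \<le> p" "f \<in> lp p" "g \<in> lp p"
  shows "lp_norm p (\<lambda>n. f n + g n) \<le> lp_norm p f + lp_norm p g"
proof -
  define A where "A = lp_norm p f"
  define B where "B = lp_norm p g"
  have p0: "0 < p" using assms by simp
  have A0: "A \<ge> 0" "B \<ge> 0" by (auto simp: A_def B_def lp_norm_def)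
  show ?thesis
  proof (cases "A = 0 \<or> B = 0")
    case True
    then show ?thesis
    proof
      assume "A = 0"
      then have "\<forall>n. f n = 0" using lp_norm_zero_iff[OF p0 assms(2)] A_def by simp
      then show ?thesis using A0 B_def A_def by simp
    next
      assume "B = 0"
      then have "\<forall>n. g n = 0" using lp_norm_zero_iff[OF p0 assms(3)] B_def by simp
      then show ?thesis using A0 B_def A_def by simp
    qed
  next
    case False
    then have Ap: "A > 0" "B > 0" using A0 by auto
    define a where "a = A / (A + B)"
    define b where "b = B / (A + B)"
    have ABn: "A + B \<noteq> 0" using Ap by simp
    have ab: "0 \<le> a" "0 \<le> b" "a + b = 1" using Ap ABn by (auto simp: a_def b_def divide_simps)
    define Sf where "Sf = (\<Sum>n. norm (f n) powr p)"
    define Sg where "Sg = (\<Sum>n. norm (g n) powr p)"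
    have SfA: "Sf = A powr p" and SgB: "Sg = B powr p"
      using lp_norm_pow[OF p0 assms(2)] lp_norm_pow[OF p0 assms(3)] by (auto simp: Sf_def Sg_def A_def B_def)
    have Sfp: "Sf > 0" "Sg > 0" using SfA SgB Ap by auto
    have sf: "summable (\<lambda>n. norm (f n) powr p)" and sg: "summable (\<lambda>n. norm (g n) powr p)"
      using assms by (auto simp: lp_def)
    have pt: "norm (f n + g n) powr p \<le> (A + B) powr p * (a * (norm (f n) powr p / Sf) + b * (norm (g n) powr p / Sg))" for n
    proof -
      have "norm (f n + g n) powr p \<le> (norm (f n) + norm (g n)) powr p"
        using p0 by (intro powr_mono2 norm_triangle_ineq) auto
      also have "norm (f n) + norm (g n) = (A + B) * (a * (norm (f n) / A) + b * (norm (g n) / B))"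
      proof -
        have "a * (norm (f n) / A) = norm (f n) / (A + B)" "b * (norm (g n) / B) = norm (g n) / (A + B)"
          using Ap by (auto simp: a_def b_def)
        then show ?thesis using ABn by (simp add: add_divide_distrib[symmetric])
      qed
      also have "((A + B) * (a * (norm (f n) / A) + b * (norm (g n) / B))) powr p
          = (A + B) powr p * (a * (norm (f n) / A) + b * (norm (g n) / B)) powr p"
        using Ap ab by (simp add: powr_mult)
      also have "(a * (norm (f n) / A) + b * (norm (g n) / B)) powr p
          \<le> a * (norm (f n) / A) powr p + b * (norm (g n) / B) powr p"
        using Ap ab by (intro convex_pow_ineq assms(1)) auto
      also have "(norm (f n) / A) powr p = norm (f n) powr p / Sf"
        using Ap SfA by (simp add: powr_divide)
      also have "(norm (g n) / B) powr p = norm (g n) powr p / Sg"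
        using Ap SgB by (simp add: powr_divide)
      finally show ?thesis using Ap by (simp add: mult_left_mono)
    qed
    have s2: "summable (\<lambda>n. (A + B) powr p * (a * (norm (f n) powr p / Sf) + b * (norm (g n) powr p / Sg)))"
      using sf sg by (intro summable_mult summable_add summable_divide) auto
    have "(\<Sum>n. norm (f n + g n) powr p) \<le> (\<Sum>n. (A + B) powr p * (a * (norm (f n) powr p / Sf) + b * (norm (g n) powr p / Sg)))"
      using pt s2 lp_add[OF _ assms(2,3)] p0 by (intro suminf_le) auto
    also have "\<dots> = (A + B) powr p * (a * (Sf / Sf) + b * (Sg / Sg))"
    proof -
      have "(\<lambda>n. norm (f n) powr p) sums Sf" "(\<lambda>n. norm (g n) powr p) sums Sg"
        using sf sg by (auto simp: Sf_def Sg_def summable_sums)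
      then have "(\<lambda>n. (A + B) powr p * (a * (norm (f n) powr p / Sf) + b * (norm (g n) powr p / Sg))) sums
          ((A + B) powr p * (a * (Sf / Sf) + b * (Sg / Sg)))"
        by (intro sums_mult sums_add sums_divide)
      then show ?thesis by (rule sums_unique[symmetric])
    qed
    also have "\<dots> = (A + B) powr p" using Sfp ab by simp
    finally have "(\<Sum>n. norm (f n + g n) powr p) \<le> (A + B) powr p" .
    then have "(\<Sum>n. norm (f n + g n) powr p) powr (1/p) \<le> ((A + B) powr p) powr (1/p)"
      using p0 lp_add[OF _ assms(2,3)] by (intro powr_mono2 suminf_nonneg) auto
    also have "\<dots> = A + B" using p0 Ap by (simp add: powr_powr)
    finally show ?thesis by (simp add: lp_norm_def A_def B_def)
  qed
qed

lemma lp_metric: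
  assumes "1 \<le> p"
  shows "Metric_space (lp p) (\<lambda>x y. lp_norm p (\<lambda>n. x n - (y n :: 'a :: real_normed_field)))"
proof
  fix x y :: "nat \<Rightarrow> 'a"
  show "0 \<le> lp_norm p (\<lambda>n. x n - y n)" by (simp add: lp_norm_def)
  show "lp_norm p (\<lambda>n. x n - y n) = lp_norm p (\<lambda>n. y n - x n)"
    by (simp add: lp_norm_def norm_minus_commute)
next
  fix x y :: "nat \<Rightarrow> 'a" assume "x \<in> lp p" "y \<in> lp p"
  then have "(\<lambda>n. x n - y n) \<in> lp p" using assms by (intro lp_diff) auto
  then show "lp_norm p (\<lambda>n. x n - y n) = 0 \<longleftrightarrow> x = y"
    using lp_norm_zero_iff[of p "\<lambda>n. x n - y n"] assms by (auto simp: fun_eq_iff)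
next
  fix x y z :: "nat \<Rightarrow> 'a" assume "x \<in> lp p" "y \<in> lp p" "z \<in> lp p"
  then have "(\<lambda>n. x n - y n) \<in> lp p" "(\<lambda>n. y n - z n) \<in> lp p" using assms by (auto intro: lp_diff)
  from minkowski[OF assms this] show "lp_norm p (\<lambda>n. x n - z n) \<le> lp_norm p (\<lambda>n. x n - y n) + lp_norm p (\<lambda>n. y n - z n)"
    by simp
qed

lemma openin_lp:
  assumes "1 \<le> p"
  shows "openin (lp_topology p) U \<longleftrightarrow> U \<subseteq> lp p \<and>
     (\<forall>x\<in>U. \<exists>r>0. \<forall>y\<in>lp p. lp_norm p (\<lambda>n. x n - (y n :: 'a :: real_normed_field)) < r \<longrightarrow> y \<in> U)"
proof -
  interpret M: Metric_space "lp p :: (nat \<Rightarrow> 'a) set" "\<lambda>x y. lp_norm p (\<lambda>n. x n - y n)"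
    by (rule lp_metric[OF assms])
  show ?thesis unfolding lp_topology_def M.openin_mtopology M.mball_def subset_iff mem_Collect_eq
    by meson
qed

lemma lp_borel_space:
  assumes "1 \<le> p"
  shows "space (lp_borel p) = (lp p :: (nat \<Rightarrow> 'a :: real_normed_field) set)"
    and "sets (lp_borel p) = sigma_sets (lp p) {U :: (nat \<Rightarrow> 'a) set. openin (lp_topology p) U}"
proof -
  have "{U :: (nat \<Rightarrow> 'a) set. openin (lp_topology p) U} \<subseteq> Pow (lp p)"
    using openin_lp[OF assms] by auto
  then show "space (lp_borel p) = (lp p :: (nat \<Rightarrow> 'a) set)"
    and "sets (lp_borel p) = sigma_sets (lp p) {U :: (nat \<Rightarrow> 'a) set. openin (lp_topology p) U}"
    unfolding lp_borel_def by (auto simp: space_measure_of_conv sets_measure_of_conv)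
qed

lemma coord_le_lp_norm:
  assumes "1 \<le> p" "h \<in> lp p"
  shows "norm (h k) \<le> lp_norm p h"
proof -
  have "norm (h k) powr p \<le> (\<Sum>n. norm (h n) powr p)"
    using sum_le_suminf[of "\<lambda>n. norm (h n) powr p" "{k}"] assms by (auto simp: lp_def)
  then have "(norm (h k) powr p) powr (1/p) \<le> (\<Sum>n. norm (h n) powr p) powr (1/p)"
    using assms by (intro powr_mono2) auto
  then show ?thesis using assms by (simp add: powr_powr lp_norm_def)
qed

lemma coord_measurable:
  assumes "1 \<le> p"
  shows "(\<lambda>x. x k) \<in> borel_measurable (lp_borel p :: (nat \<Rightarrow> 'a :: real_normed_field) measure)"
proof (rule borel_measurableI)
  fix S :: "'a set" assume S: "open S"
  have "openin (lp_topology p) {x \<in> lp p. x k \<in> S}"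
    unfolding openin_lp[OF assms]
  proof (intro conjI ballI)
    fix x assume x: "x \<in> {x \<in> lp p. x k \<in> S}"
    then obtain e where e: "e > 0" "ball (x k) e \<subseteq> S" using S open_contains_ball by blast
    show "\<exists>r>0. \<forall>y\<in>lp p. lp_norm p (\<lambda>n. x n - y n) < r \<longrightarrow> y \<in> {x \<in> lp p. x k \<in> S}"
    proof (intro exI[of _ e] conjI ballI impI)
      fix y assume y: "y \<in> lp p" "lp_norm p (\<lambda>n. x n - y n) < e"
      have "norm (x k - y k) \<le> lp_norm p (\<lambda>n. x n - y n)"
        using coord_le_lp_norm[OF assms lp_diff[of p x y]] x y assms by auto
      then have "y k \<in> ball (x k) e" using y by (simp add: dist_norm)
      then show "y \<in> {x \<in> lp p. x k \<in> S}" using e y by auto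
    qed (use e in auto)
  qed auto
  then show "(\<lambda>x. x k) -` S \<inter> space (lp_borel p) \<in> sets (lp_borel p)"
  proof -
    assume op: "openin (lp_topology p) {x \<in> lp p. x k \<in> S}" 
    have "(\<lambda>x. x k) -` S \<inter> lp p = {x \<in> lp p. x k \<in> S}" by auto
    then show ?thesis unfolding lp_borel_space[OF assms] using op by (auto intro!: sigma_sets.Basic)
  qed
qed

lemma wshift_lp:
  assumes "0 \<le> p" "bounded (range a)" "x \<in> lp p"
  shows "wshift a x \<in> lp p"
proof -
  obtain C where C: "\<And>n. norm (a n) \<le> C" using assms(2) by (auto simp: bounded_iff)
  have "summable (\<lambda>n. norm (x (Suc n)) powr p)"
    using assms(3) summable_Suc_iff[where f="\<lambda>n. norm (x n) powr p"] by (simp add: lp_def)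
  then have "summable (\<lambda>n. C powr p * norm (x (Suc n)) powr p)" by (rule summable_mult)
  moreover have bd: "norm (norm (a (Suc n) * x (Suc n)) powr p) \<le> C powr p * norm (x (Suc n)) powr p" for n
  proof -
    have "norm (a (Suc n) * x (Suc n)) powr p = norm (a (Suc n)) powr p * norm (x (Suc n)) powr p"
      by (simp add: norm_mult powr_mult)
    also have "\<dots> \<le> C powr p * norm (x (Suc n)) powr p"
      using C assms(1) by (intro mult_right_mono powr_mono2) auto
    finally show ?thesis by simp
  qed
  ultimately have "summable (\<lambda>n. norm (a (Suc n) * x (Suc n)) powr p)"
    by (rule summable_comparison_test'[where N=0])
  then show ?thesis by (simp add: lp_def wshift_def)
qed

definition Ev :: "real \<Rightarrow> nat \<Rightarrow> real \<Rightarrow> (nat \<Rightarrow> 'a::real_normed_field) \<Rightarrow> nat \<Rightarrow> (nat \<Rightarrow> 'a) set" where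
  "Ev p N K c n = {x \<in> lp p. \<exists>d\<le>N. K < norm (c d * x (n + d))}"

lemma Ev_sets:
  assumes "1 \<le> p"
  shows "Ev p N K c n \<in> sets (lp_borel p)"
proof -
  have m: "(\<lambda>x. norm (c d * x (n + d))) \<in> borel_measurable (lp_borel p)" for d
  proof -
    have "(\<lambda>y. norm (c d * y)) \<in> borel_measurable borel"
      by (intro borel_measurable_continuous_onI continuous_intros)
    from measurable_compose[OF coord_measurable[OF assms, of "n + d"] this] show ?thesis by simp
  qed
  have s: "{x \<in> lp p. K < norm (c d * x (n + d))} \<in> sets (lp_borel p)" for d
  proof -
    have "(\<lambda>x. norm (c d * x (n + d))) -` {K<..} \<inter> space (lp_borel p) \<in> sets (lp_borel p)"
      using measurable_sets[OF m[of d], of "{K<..}"] by simp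
    moreover have "(\<lambda>x. norm (c d * x (n + d))) -` {K<..} \<inter> space (lp_borel p) = {x \<in> lp p. K < norm (c d * x (n + d))}"
      using lp_borel_space[OF assms] by auto
    ultimately show ?thesis by simp
  qed
  have "Ev p N K c n = (\<Union>d\<in>{..N}. {x \<in> lp p. K < norm (c d * x (n + d))})"
    by (auto simp: Ev_def)
  also have "\<dots> \<in> sets (lp_borel p)" using s by (intro sets.finite_UN) auto
  finally show ?thesis .
qed

lemma inv_step:
  assumes p: "1 \<le> p" and ba: "bounded (range a)" and a0: "\<forall>n\<ge>1. a n \<noteq> 0"
    and m: "lp_invariant_prob p (wshift a) m"
  shows "emeasure m (Ev p N K c (Suc n)) = emeasure m (Ev p N K (\<lambda>d. c d / a (Suc (n + d))) n)"
proof -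
  have eq: "Ev p N K c (Suc n) = {x \<in> lp p. wshift a x \<in> Ev p N K (\<lambda>d. c d / a (Suc (n + d))) n}"
  proof -
    have "c d / a (Suc (n + d)) * wshift a x (n + d) = c d * x (Suc n + d)" for x d
      using a0 by (simp add: wshift_def)
    then show ?thesis using wshift_lp[OF _ ba, of p] p by (auto simp: Ev_def)
  qed
  have "Ev p N K (\<lambda>d. c d / a (Suc (n + d))) n \<in> sets (lp_borel p)" by (rule Ev_sets[OF p])
  then show ?thesis unfolding eq using m unfolding lp_invariant_prob_def by blast
qed

lemma inv_iter:
  assumes p: "1 \<le> p" and ba: "bounded (range a)" and a0: "\<forall>n\<ge>1. a n \<noteq> 0"
    and m: "lp_invariant_prob p (wshift a) m"
  shows "emeasure m (Ev p N K c n) = emeasure m (Ev p N K (\<lambda>d. c d / (\<Prod>i\<in>{Suc d..d + n}. a i)) 0)"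
proof (induction n arbitrary: c)
  case 0
  then show ?case by simp
next
  case (Suc n)
  have "emeasure m (Ev p N K c (Suc n)) = emeasure m (Ev p N K (\<lambda>d. c d / a (Suc (n + d))) n)"
    by (rule inv_step[OF assms])
  also have "\<dots> = emeasure m (Ev p N K (\<lambda>d. c d / a (Suc (n + d)) / (\<Prod>i\<in>{Suc d..d + n}. a i)) 0)"
    by (rule Suc.IH)
  also have "(\<lambda>d. c d / a (Suc (n + d)) / (\<Prod>i\<in>{Suc d..d + n}. a i)) = (\<lambda>d. c d / (\<Prod>i\<in>{Suc d..d + Suc n}. a i))"
  proof
    fix d
    have pe: "(\<Prod>i\<in>{Suc d..d + Suc n}. a i) = (\<Prod>i\<in>{Suc d..d + n}. a i) * a (Suc (n + d))"
    proof -
      have eq: "n + d = d + n" by simp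
      show ?thesis unfolding eq by (simp add: prod.cl_ivl_Suc)
    qed
    show "c d / a (Suc (n + d)) / (\<Prod>i\<in>{Suc d..d + n}. a i) = c d / (\<Prod>i\<in>{Suc d..d + Suc n}. a i)"
      unfolding pe by (simp only: divide_divide_eq_left mult.commute)
  qed
  finally show ?case .
qed

lemma prod_split:
  "(\<Prod>i\<in>{1..d + n}. a i) = (\<Prod>i\<in>{1..d}. a i) * (\<Prod>i\<in>{Suc d..d + n}. (a i :: 'a::comm_monoid_mult))"
proof (induction n)
  case 0
  then show ?case by simp
next
  case (Suc n)
  then show ?case by (simp add: prod.cl_ivl_Suc mult.assoc)
qed

lemma prod_nz:
  assumes "\<forall>n\<ge>1. a n \<noteq> 0"
  shows "(\<Prod>i\<in>{1..m::nat}. a i) \<noteq> (0::'a::field)"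
  using assms by (subst prod_zero_iff) auto

lemma div_gt_aux:
  fixes K q s delta :: real
  assumes "0 < K" "0 < q" "q \<le> delta / K" "delta < s"
  shows "K < s / q"
proof -
  have "K * q \<le> delta" using assms by (simp add: pos_le_divide_eq mult.commute)
  then have "K * q < s" using assms by linarith
  then show ?thesis using assms by (simp add: pos_less_divide_eq)
qed

lemma key:
  fixes a b :: "nat \<Rightarrow> 'a::real_normed_field"
  assumes p: "1 \<le> p" and ba: "bounded (range a)" and bb: "bounded (range b)"
    and a0: "\<forall>n\<ge>1. a n \<noteq> 0" and b0: "\<forall>n\<ge>1. b n \<noteq> 0"
    and ma: "lp_invariant_prob p (wshift a) ma" and mb: "lp_invariant_prob p (wshift b) mb"
    and ma0: "emeasure ma {\<lambda>n. 0} = 0"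
    and freq: "\<And>N e n0. e > 0 \<Longrightarrow> \<exists>n\<ge>n0. \<forall>d\<le>N. norm ((\<Prod>i\<in>{1..n+d}. a i) / (\<Prod>i\<in>{1..n+d}. b i)) \<le> e"
    and eta: "eta > 0"
  shows "\<exists>B\<in>sets (lp_borel p). measure mb B < eta \<and> measure ma (lp p - B) < eta"
proof -
  interpret MA: prob_space ma using ma by (simp add: lp_invariant_prob_def)
  interpret MB: prob_space mb using mb by (simp add: lp_invariant_prob_def)
  have sa: "sets ma = sets (lp_borel p)" "space ma = lp p"
    and sb: "sets mb = sets (lp_borel p)" "space mb = lp p"
    using ma mb by (auto simp: lp_invariant_prob_def)
  have Evs: "Ev p N K c n \<in> sets ma" "Ev p N K c n \<in> sets mb" for N K c n
    using Ev_sets[OF p] sa sb by auto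
  define Aw where "Aw d = (\<Prod>i\<in>{1..d}. a i)" for d
  define Bw where "Bw d = (\<Prod>i\<in>{1..d}. b i)" for d
  have Awnz: "Aw d \<noteq> 0" for d unfolding Aw_def by (rule prod_nz[OF a0])
  have Bwnz: "Bw d \<noteq> 0" for d unfolding Bw_def by (rule prod_nz[OF b0])
  have Panz: "(\<Prod>i\<in>{Suc d..d + n}. a i) \<noteq> 0" for d n using a0 by (subst prod_zero_iff) auto
  have Pbnz: "(\<Prod>i\<in>{Suc d..d + n}. b i) \<noteq> 0" for d n using b0 by (subst prod_zero_iff) auto

  define F :: "nat \<Rightarrow> (nat \<Rightarrow> 'a) set" where "F N = Ev p N 0 (\<lambda>_. 1) 0" for N
  have F_eq: "F N = {x \<in> lp p. \<exists>d\<le>N. x d \<noteq> 0}" for N by (auto simp: F_def Ev_def)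
  have "incseq F" unfolding incseq_def F_eq by (auto intro: order_trans)
  have zero_in: "(\<lambda>n. 0) \<in> lp p" by (simp add: lp_def)
  have UF: "space ma - (\<Union>N. F N) = {\<lambda>n. 0}"
    using zero_in by (auto simp: F_eq sa fun_eq_iff)
  have UFs: "(\<Union>N. F N) \<in> sets ma" using Evs unfolding F_def by auto
  have "measure ma (\<Union>N. F N) = 1"
  proof -
    have "measure ma (space ma - (\<Union>N. F N)) = measure ma (space ma) - measure ma (\<Union>N. F N)"
      by (rule MA.finite_measure_compl[OF UFs])
    moreover have "measure ma {\<lambda>n. 0} = 0" using ma0 by (simp add: measure_def)
    ultimately show ?thesis using UF MA.prob_space by simp
  qed
  moreover have "(\<lambda>N. measure ma (F N)) \<longlonglongrightarrow> measure ma (\<Union>N. F N)"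
    using Evs \<open>incseq F\<close> unfolding F_def by (intro MA.finite_Lim_measure_incseq) auto
  ultimately have "eventually (\<lambda>N. 1 - eta / 2 < measure ma (F N)) sequentially"
    using eta by (intro order_tendstoD(1)) auto
  then obtain N where N: "1 - eta / 2 < measure ma (F N)" by (auto simp: eventually_sequentially)

  define G :: "nat \<Rightarrow> (nat \<Rightarrow> 'a) set" where "G j = Ev p N (1 / real (Suc j)) Aw 0" for j
  have "incseq G"
    unfolding incseq_def
  proof (intro allI impI subsetI)
    fix j k x assume jk: "j \<le> k" and x: "x \<in> G j"
    have "1 / real (Suc k) \<le> 1 / real (Suc j)" using jk by (intro divide_left_mono) auto
    then show "x \<in> G k" using x by (force simp: G_def Ev_def)
  qed
  have UG: "(\<Union>j. G j) = F N"
  proof (intro equalityI subsetI)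
    fix x assume "x \<in> (\<Union>j. G j)"
    then obtain j d where "x \<in> lp p" "d \<le> N" "1 / real (Suc j) < norm (Aw d * x d)"
      by (auto simp: G_def Ev_def)
    moreover have "0 < 1 / real (Suc j)" by simp
    ultimately show "x \<in> F N" by (auto simp: F_eq)
  next
    fix x assume "x \<in> F N"
    then obtain d where d: "x \<in> lp p" "d \<le> N" "x d \<noteq> 0" by (auto simp: F_eq)
    then have "0 < norm (Aw d * x d)" using Awnz by simp
    then obtain j where "inverse (real (Suc j)) < norm (Aw d * x d)"
      using reals_Archimedean by blast
    then show "x \<in> (\<Union>j. G j)" using d by (auto simp: G_def Ev_def inverse_eq_divide)
  qed
  have "(\<lambda>j. measure ma (G j)) \<longlonglongrightarrow> measure ma (F N)"
  proof -
    have "range G \<subseteq> sets ma" using Evs by (auto simp: G_def)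
    from MA.finite_Lim_measure_incseq[OF this \<open>incseq G\<close>] show ?thesis unfolding UG .
  qed
  then have "eventually (\<lambda>j. 1 - eta < measure ma (G j)) sequentially"
    using N eta by (intro order_tendstoD(1)) auto
  then obtain j0 where j0: "1 - eta < measure ma (G j0)" by (auto simp: eventually_sequentially)
  define delta where "delta = 1 / real (Suc j0)"
  have delta: "delta > 0" by (simp add: delta_def)

  define H :: "nat \<Rightarrow> (nat \<Rightarrow> 'a) set" where "H k = Ev p N (real (Suc k)) Bw 0" for k
  have "decseq H"
    unfolding decseq_def
  proof (intro allI impI subsetI)
    fix k l x assume kl: "k \<le> l" and x: "x \<in> H l"
    then show "x \<in> H k" by (force simp: H_def Ev_def)
  qed
  have IH: "(\<Inter>k. H k) = {}"
  proof (intro equalityI subsetI)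
    fix x assume x: "x \<in> (\<Inter>k. H k)"
    obtain k where k: "(\<Sum>d\<le>N. norm (Bw d * x d)) < real k" using reals_Archimedean2 by blast
    from x have "x \<in> H k" by auto
    then obtain d where d: "d \<le> N" "real (Suc k) < norm (Bw d * x d)" by (auto simp: H_def Ev_def)
    have "norm (Bw d * x d) \<le> (\<Sum>d\<le>N. norm (Bw d * x d))"
      using d by (intro member_le_sum) auto
    then show "x \<in> {}" using d k by simp
  qed simp
  have "(\<lambda>k. measure mb (H k)) \<longlonglongrightarrow> measure mb (\<Inter>k. H k)"
    using Evs \<open>decseq H\<close> unfolding H_def by (intro MB.finite_Lim_measure_decseq) auto
  then have "eventually (\<lambda>k. measure mb (H k) < eta) sequentially"
    using IH eta by (intro order_tendstoD(2)) auto
  then obtain k0 where k0: "measure mb (H k0) < eta" by (auto simp: eventually_sequentially)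
  define K where "K = real (Suc k0)"
  have K: "K > 0" by (simp add: K_def)

  obtain n where n: "\<forall>d\<le>N. norm (Aw (n + d) / Bw (n + d)) \<le> delta / K"
    using freq[of "delta / K" 0 N] delta K unfolding Aw_def Bw_def by auto
  define B where "B = Ev p N K (\<lambda>d. Bw (n + d)) n"
  have Bs: "B \<in> sets (lp_borel p)" unfolding B_def by (rule Ev_sets[OF p])
  have "emeasure mb B = emeasure mb (Ev p N K (\<lambda>d. Bw (n + d) / (\<Prod>i\<in>{Suc d..d + n}. b i)) 0)"
    unfolding B_def by (rule inv_iter[OF p bb b0 mb])
  also have "(\<lambda>d. Bw (n + d) / (\<Prod>i\<in>{Suc d..d + n}. b i)) = Bw"
  proof
    fix d
    have "Bw (n + d) = Bw d * (\<Prod>i\<in>{Suc d..d + n}. b i)"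
      unfolding Bw_def using prod_split[of b d n] by (simp add: add.commute)
    then show "Bw (n + d) / (\<Prod>i\<in>{Suc d..d + n}. b i) = Bw d" using Pbnz by simp
  qed
  finally have "emeasure mb B = emeasure mb (H k0)" by (simp add: H_def K_def)
  then have mbB: "measure mb B < eta" using k0 by (simp add: measure_def)
  have "G j0 \<subseteq> Ev p N K (\<lambda>d. Bw (n + d) / (\<Prod>i\<in>{Suc d..d + n}. a i)) 0"
  proof
    fix x assume "x \<in> G j0"
    then obtain d where x: "x \<in> lp p" "d \<le> N" "delta < norm (Aw d * x d)"
      by (auto simp: G_def Ev_def delta_def)
    define P where "P = (\<Prod>i\<in>{Suc d..d + n}. a i)"
    have P: "P \<noteq> 0" using Panz by (simp add: P_def)
    have AP: "Aw (n + d) = Aw d * P"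
      unfolding Aw_def P_def using prod_split[of a d n] by (simp add: add.commute)
    have q: "0 < norm (Aw (n + d) / Bw (n + d))" using Awnz Bwnz by simp
    have eqq: "Bw (n + d) / P * x d = (Aw d * x d) / (Aw (n + d) / Bw (n + d))"
      using P Awnz Bwnz AP by (simp add: field_simps)
    have "norm (Bw (n + d) / P * x d) = norm (Aw d * x d) / norm (Aw (n + d) / Bw (n + d))"
      unfolding eqq by (rule norm_divide)
    moreover have "K < norm (Aw d * x d) / norm (Aw (n + d) / Bw (n + d))"
      using div_gt_aux[OF K q] n x by auto
    ultimately show "x \<in> Ev p N K (\<lambda>d. Bw (n + d) / (\<Prod>i\<in>{Suc d..d + n}. a i)) 0"
      using x by (auto simp: Ev_def P_def)
  qed
  then have "measure ma (G j0) \<le> measure ma (Ev p N K (\<lambda>d. Bw (n + d) / (\<Prod>i\<in>{Suc d..d + n}. a i)) 0)"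
    using Evs by (intro MA.finite_measure_mono) auto
  also have "\<dots> = measure ma B"
    unfolding B_def measure_def using inv_iter[OF p ba a0 ma] by simp
  finally have "1 - eta < measure ma B" using j0 by simp
  moreover have "measure ma (lp p - B) = 1 - measure ma B"
    using MA.prob_compl[of B] Bs sa by simp
  ultimately show ?thesis using Bs mbB by auto
qed

lemma core:
  fixes a b :: "nat \<Rightarrow> 'a::real_normed_field"
  assumes p: "1 \<le> p" and ba: "bounded (range a)" and bb: "bounded (range b)"
    and a0: "\<forall>n\<ge>1. a n \<noteq> 0" and b0: "\<forall>n\<ge>1. b n \<noteq> 0"
    and ma: "lp_invariant_prob p (wshift a) ma" and mb: "lp_invariant_prob p (wshift b) mb"
    and ma0: "emeasure ma {\<lambda>n. 0} = 0"
    and freq: "\<And>N e n0. e > 0 \<Longrightarrow> \<exists>n\<ge>n0. \<forall>d\<le>N. norm ((\<Prod>i\<in>{1..n+d}. a i) / (\<Prod>i\<in>{1..n+d}. b i)) \<le> e"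
  shows "\<exists>A\<in>sets (lp_borel p). emeasure mb A = 0 \<and> emeasure ma (lp p - A) = 0"
proof -
  interpret MA: prob_space ma using ma by (simp add: lp_invariant_prob_def)
  interpret MB: prob_space mb using mb by (simp add: lp_invariant_prob_def)
  have sa: "sets ma = sets (lp_borel p)" "space ma = lp p"
    and sb: "sets mb = sets (lp_borel p)" "space mb = lp p"
    using ma mb by (auto simp: lp_invariant_prob_def)
  have "\<forall>k. \<exists>B. B \<in> sets (lp_borel p) \<and> measure mb B < (1/2)^k \<and> measure ma (lp p - B) < (1/2)^k"
  proof
    fix k :: nat
    have "(0::real) < (1/2)^k" by simp
    from key[OF assms this] show "\<exists>B. B \<in> sets (lp_borel p) \<and> measure mb B < (1/2)^k \<and> measure ma (lp p - B) < (1/2)^k"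
      by blast
  qed
  then obtain B where Bs: "\<And>k. B k \<in> sets (lp_borel p)" and Bb: "\<And>k. measure mb (B k) < (1/2)^k"
    and Ba: "\<And>k. measure ma (lp p - B k) < (1/2)^k" by metis
  have geo: "summable (\<lambda>k. (1/2::real)^k)" by (rule summable_geometric) simp
  have "limsup B \<in> null_sets mb"
  proof (rule borel_cantelli_limsup1)
    show "B n \<in> sets mb" for n using Bs sb by simp
    show "emeasure mb (B n) < \<infinity>" for n by (simp add: less_top[symmetric])
    show "summable (\<lambda>n. measure mb (B n))"
      by (rule summable_comparison_test'[where N=0, OF geo]) (use Bb in \<open>auto intro: less_imp_le\<close>)
  qed
  then have A1: "limsup B \<in> sets (lp_borel p)" "emeasure mb (limsup B) = 0"
    using sb by (auto dest: null_setsD1 null_setsD2)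
  have "limsup (\<lambda>k. lp p - B k) \<in> null_sets ma"
  proof (rule borel_cantelli_limsup1)
    show "lp p - B n \<in> sets ma" for n using Bs sa by (metis sets.compl_sets)
    show "emeasure ma (lp p - B n) < \<infinity>" for n by (simp add: less_top[symmetric])
    show "summable (\<lambda>n. measure ma (lp p - B n))"
      by (rule summable_comparison_test'[where N=0, OF geo]) (use Ba in \<open>auto intro: less_imp_le\<close>)
  qed
  moreover have "lp p - limsup B \<subseteq> limsup (\<lambda>k. lp p - B k)"
  proof
    fix x assume x: "x \<in> lp p - limsup B"
    then obtain n0 where n0: "\<forall>m\<ge>n0. x \<notin> B m" by (auto simp: limsup_INF_SUP)
    have "\<forall>n. \<exists>m\<ge>n. x \<in> lp p - B m"
    proof
      fix n show "\<exists>m\<ge>n. x \<in> lp p - B m" using n0 x by (intro exI[of _ "max n n0"]) auto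
    qed
    then show "x \<in> limsup (\<lambda>k. lp p - B k)" by (auto simp: limsup_INF_SUP)
  qed
  moreover have "lp p - limsup B \<in> sets ma" using A1 sa by (metis sets.compl_sets)
  ultimately have "lp p - limsup B \<in> null_sets ma" by (blast intro: null_sets_subset)
  then have "emeasure ma (lp p - limsup B) = 0" by auto
  then show ?thesis using A1 by blast
qed

lemma liminf_freq:
  fixes f :: "nat \<Rightarrow> real"
  assumes "liminf (\<lambda>n. ereal (f n)) = 0" "e > 0"
  shows "\<exists>n\<ge>n0. f n < e"
proof -
  have "\<not> ereal e \<le> liminf (\<lambda>n. ereal (f n))" using assms by simp
  then obtain y where y: "y < ereal e" "\<not> eventually (\<lambda>n. y < ereal (f n)) sequentially"
    unfolding le_Liminf_iff by blast
  then have "frequently (\<lambda>n. \<not> y < ereal (f n)) sequentially" by (simp add: not_eventually)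
  then obtain n where n: "n \<ge> n0" "\<not> y < ereal (f n)" unfolding frequently_sequentially by blast
  then have "ereal (f n) \<le> y" by (simp add: not_less)
  then have "ereal (f n) < ereal e" using y(1) by (rule le_less_trans)
  then show ?thesis using n by (intro exI[of _ n]) auto
qed

lemma limsup_freq:
  fixes f :: "nat \<Rightarrow> real"
  assumes "limsup (\<lambda>n. ereal (f n)) = \<infinity>"
  shows "\<exists>n\<ge>n0. f n > C"
proof -
  have "\<not> limsup (\<lambda>n. ereal (f n)) \<le> ereal C" using assms by simp
  then obtain y where y: "y > ereal C" "\<not> eventually (\<lambda>n. y > ereal (f n)) sequentially"
    unfolding Limsup_le_iff by blast
  then have "frequently (\<lambda>n. \<not> y > ereal (f n)) sequentially" by (simp add: not_eventually)
  then obtain n where n: "n \<ge> n0" "\<not> y > ereal (f n)" unfolding frequently_sequentially by blast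
  then have "y \<le> ereal (f n)" by (simp add: not_less)
  then have "ereal C < ereal (f n)" by (rule less_le_trans[OF y(1)])
  then show ?thesis using n by (intro exI[of _ n]) auto
qed

theorem theorem3p10:
  fixes p :: real and u v :: "nat \<Rightarrow> 'a::{real_normed_field, banach}"
  assumes "1 \<le> p"
    and "bounded (range u)" and "bounded (range v)"
    and "\<forall>n\<ge>1. u n \<noteq> 0" and "\<forall>n\<ge>1. v n \<noteq> 0"
    and "(\<forall>N::nat. liminf (\<lambda>n. ereal (Max ((\<lambda>d. norm ((\<Prod>i\<in>{1..n+d}. u i) / (\<Prod>i\<in>{1..n+d}. v i))) ` {0..N}))) = 0)
       \<or> (\<forall>N::nat. limsup (\<lambda>n. ereal (Min ((\<lambda>d. norm ((\<Prod>i\<in>{1..n+d}. u i) / (\<Prod>i\<in>{1..n+d}. v i))) ` {0..N}))) = \<infinity>)"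
  shows "lp_orthogonal p (wshift u) (wshift v)"
  unfolding lp_orthogonal_def
proof (intro allI impI, elim conjE)
  fix m1 m2 assume m1: "lp_invariant_prob p (wshift u) m1" and m2: "lp_invariant_prob p (wshift v) m2"
    and m10: "emeasure m1 {\<lambda>n. 0} = 0" and m20: "emeasure m2 {\<lambda>n. 0} = 0"
  have s1: "sets m1 = sets (lp_borel p)" "space m1 = lp p"
    and s2: "sets m2 = sets (lp_borel p)" "space m2 = lp p"
    using m1 m2 by (auto simp: lp_invariant_prob_def)
  define Q where "Q n = norm ((\<Prod>i\<in>{1..n}. u i) / (\<Prod>i\<in>{1..n}. v i))" for n
  from assms(6) show "mutually_singular m1 m2"
  proof
    assume H: "\<forall>N::nat. liminf (\<lambda>n. ereal (Max ((\<lambda>d. norm ((\<Prod>i\<in>{1..n+d}. u i) / (\<Prod>i\<in>{1..n+d}. v i))) ` {0..N}))) = 0"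
    have freq: "\<exists>n\<ge>n0. \<forall>d\<le>N. norm ((\<Prod>i\<in>{1..n+d}. u i) / (\<Prod>i\<in>{1..n+d}. v i)) \<le> e"
      if e: "e > 0" for N e n0
    proof -
      obtain n where n: "n \<ge> n0" "Max ((\<lambda>d. norm ((\<Prod>i\<in>{1..n+d}. u i) / (\<Prod>i\<in>{1..n+d}. v i))) ` {0..N}) < e"
        using liminf_freq[OF spec[OF H, of N] e] by blast
      have "\<forall>d\<le>N. norm ((\<Prod>i\<in>{1..n+d}. u i) / (\<Prod>i\<in>{1..n+d}. v i)) \<le> e"
      proof (intro allI impI)
        fix d assume "d \<le> N"
        then have "norm ((\<Prod>i\<in>{1..n+d}. u i) / (\<Prod>i\<in>{1..n+d}. v i))
          \<le> Max ((\<lambda>d. norm ((\<Prod>i\<in>{1..n+d}. u i) / (\<Prod>i\<in>{1..n+d}. v i))) ` {0..N})"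
          by (intro Max_ge) auto
        then show "norm ((\<Prod>i\<in>{1..n+d}. u i) / (\<Prod>i\<in>{1..n+d}. v i)) \<le> e" using n(2) by linarith
      qed
      then show ?thesis using n by blast
    qed
    obtain A where A: "A \<in> sets (lp_borel p)" "emeasure m2 A = 0" "emeasure m1 (lp p - A) = 0"
      using core[OF assms(1,2,3,4,5) m1 m2 m10 freq] by blast
    have "A \<subseteq> lp p" using A s2 sets.sets_into_space[of A m2] by auto
    then have "space m2 - (lp p - A) = A" using s2 by auto
    moreover have "lp p - A \<in> sets m1" using A s1 by (metis sets.compl_sets)
    ultimately show ?thesis unfolding mutually_singular_def using A s1 s2 by auto
  next
    assume H: "\<forall>N::nat. limsup (\<lambda>n. ereal (Min ((\<lambda>d. norm ((\<Prod>i\<in>{1..n+d}. u i) / (\<Prod>i\<in>{1..n+d}. v i))) ` {0..N}))) = \<infinity>"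
    have freq: "\<exists>n\<ge>n0. \<forall>d\<le>N. norm ((\<Prod>i\<in>{1..n+d}. v i) / (\<Prod>i\<in>{1..n+d}. u i)) \<le> e"
      if e: "e > 0" for N e n0
    proof -
      obtain n where n: "n \<ge> n0" "1 / e < Min ((\<lambda>d. norm ((\<Prod>i\<in>{1..n+d}. u i) / (\<Prod>i\<in>{1..n+d}. v i))) ` {0..N})"
        using limsup_freq[OF spec[OF H, of N]] by blast
      have "\<forall>d\<le>N. norm ((\<Prod>i\<in>{1..n+d}. v i) / (\<Prod>i\<in>{1..n+d}. u i)) \<le> e"
      proof (intro allI impI)
        fix d assume "d \<le> N"
        then have "Min ((\<lambda>d. norm ((\<Prod>i\<in>{1..n+d}. u i) / (\<Prod>i\<in>{1..n+d}. v i))) ` {0..N})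
          \<le> norm ((\<Prod>i\<in>{1..n+d}. u i) / (\<Prod>i\<in>{1..n+d}. v i))"
          by (intro Min_le) auto
        then have gt: "1 / e < norm ((\<Prod>i\<in>{1..n+d}. u i) / (\<Prod>i\<in>{1..n+d}. v i))" using n(2) by linarith
        have "norm ((\<Prod>i\<in>{1..n+d}. v i) / (\<Prod>i\<in>{1..n+d}. u i)) = inverse (norm ((\<Prod>i\<in>{1..n+d}. u i) / (\<Prod>i\<in>{1..n+d}. v i)))"
          by (simp add: norm_divide)
        also have "\<dots> < inverse (1 / e)"
          using gt e by (intro less_imp_inverse_less) auto
        finally show "norm ((\<Prod>i\<in>{1..n+d}. v i) / (\<Prod>i\<in>{1..n+d}. u i)) \<le> e" by simp
      qed
      then show ?thesis using n by blast
    qed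
    obtain A where A: "A \<in> sets (lp_borel p)" "emeasure m1 A = 0" "emeasure m2 (lp p - A) = 0"
      using core[OF assms(1,3,2,5,4) m2 m1 m20 freq] by blast
    then show ?thesis unfolding mutually_singular_def using s1 s2 by auto
  qed
qed

end
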